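(* Let $\mathcal A$ be a commutative unital $C^*$-algebra, let $(E,\langle\cdot,\cdot\rangle)$ be a Hilbert $\mathcal A$-module in which every closed submodule is orthogonally complemented, and let $\xi\in E$ with $\langle\xi,\xi\rangle$ invertible. Equip $E$ with the standard $\mathcal A$-2-inner product $\langle x,y|z\rangle=\langle x,y\rangle\langle z,z\rangle-\langle x,z\rangle\langle z,y\rangle$, and suppose $\{x_i\}_{i\in\mathbb N}\subset E$ satisfies, for some reals $0<A\le B$ and all $x\in E$, $$A\langle x,x|\xi\rangle\le\sum_{i}\langle x,x_i|\xi\rangle\langle x_i,x|\xi\rangle\le B\langle x,x|\xi\rangle.$$ Let $L_\xi^{\perp}=\{x\in E:\langle a\xi,x\rangle=0\ \text{for all } a\in\mathcal A\}$. Then there exist reals $0<C\le D$ such that $C\langle x,x\rangle\le\sum_i\langle x,x_i\rangle\langle x_i,x\rangle\le D\langle x,x\rangle$ for all $x\in L_\xi^\perp$; that is, $\{x_i\}$ is a frame for $L_\xi^\perp$.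
   Context: A Hilbert $\mathcal A$-module is a left $\mathcal A$-module $E$ with an $\mathcal A$-valued inner product $\langle\cdot,\cdot\rangle$ satisfying $\langle x,x\rangle\ge0$, $\langle x,x\rangle=0$ iff $x=0$, $\langle x,y\rangle=\langle y,x\rangle^*$, $\langle ax,by\rangle=a^*\langle x,y\rangle b$, complex-linear in the second variable, and complete for $\|x\|=\|\langle x,x\rangle\|^{1/2}$. Inequalities between elements of $\mathcal A$ refer to the order on self-adjoint elements; all series converge in norm. *)

theory Defs
  imports "HOL-Analysis.Analysis"
begin

text \<open>A commutative unital C*-algebra. The carrier is a type that is a commutative
unital real Banach algebra; the complex scalar multiplication cscale and the
involution star are given explicitly.\<close>

definition comm_cstar_algebra ::
  "('a::{comm_ring_1, real_normed_algebra_1, banach} \<Rightarrow> 'a) \<Rightarrow> (complex \<Rightarrow> 'a \<Rightarrow> 'a) \<Rightarrow> bool" where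
  "comm_cstar_algebra star cscale \<longleftrightarrow>
     (\<forall>r a. cscale (complex_of_real r) a = scaleR r a) \<and>
     (\<forall>c d a. cscale (c * d) a = cscale c (cscale d a)) \<and>
     (\<forall>c d a. cscale (c + d) a = cscale c a + cscale d a) \<and>
     (\<forall>c a b. cscale c (a + b) = cscale c a + cscale c b) \<and>
     (\<forall>c a b. cscale c (a * b) = cscale c a * b) \<and>
     (\<forall>c a. norm (cscale c a) = cmod c * norm a) \<and>
     (\<forall>a. star (star a) = a) \<and>
     (\<forall>a b. star (a + b) = star a + star b) \<and>
     (\<forall>c a. star (cscale c a) = cscale (cnj c) (star a)) \<and>
     (\<forall>a b. star (a * b) = star b * star a) \<and>
     (\<forall>a. norm (star a * a) = (norm a)\<^sup>2)"

definition cstar_pos :: "('a::ring \<Rightarrow> 'a) \<Rightarrow> 'a \<Rightarrow> bool" where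
  "cstar_pos star a \<longleftrightarrow> (\<exists>c. a = star c * c)"

definition cstar_le :: "('a::ring \<Rightarrow> 'a) \<Rightarrow> 'a \<Rightarrow> 'a \<Rightarrow> bool" where
  "cstar_le star a b \<longleftrightarrow> star a = a \<and> star b = b \<and> cstar_pos star (b - a)"

definition hm_tendsto :: "('e::ab_group_add \<Rightarrow> 'e \<Rightarrow> 'a::real_normed_vector) \<Rightarrow> (nat \<Rightarrow> 'e) \<Rightarrow> 'e \<Rightarrow> bool" where
  "hm_tendsto ip f x \<longleftrightarrow> (\<lambda>n. sqrt (norm (ip (f n - x) (f n - x)))) \<longlonglongrightarrow> 0"

definition hm_cauchy :: "('e::ab_group_add \<Rightarrow> 'e \<Rightarrow> 'a::real_normed_vector) \<Rightarrow> (nat \<Rightarrow> 'e) \<Rightarrow> bool" where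
  "hm_cauchy ip f \<longleftrightarrow> (\<forall>e>0. \<exists>N. \<forall>m\<ge>N. \<forall>n\<ge>N. sqrt (norm (ip (f m - f n) (f m - f n))) < e)"

definition hilbert_module ::
  "('a::{comm_ring_1, real_normed_algebra_1, banach} \<Rightarrow> 'a) \<Rightarrow> (complex \<Rightarrow> 'a \<Rightarrow> 'a)
   \<Rightarrow> ('a \<Rightarrow> 'e::ab_group_add \<Rightarrow> 'e) \<Rightarrow> ('e \<Rightarrow> 'e \<Rightarrow> 'a) \<Rightarrow> bool" where
  "hilbert_module star cscale act ip \<longleftrightarrow>
     comm_cstar_algebra star cscale \<and>
     (\<forall>a x y. act a (x + y) = act a x + act a y) \<and>
     (\<forall>a b x. act (a + b) x = act a x + act b x) \<and>
     (\<forall>a b x. act (a * b) x = act a (act b x)) \<and>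
     (\<forall>x. act 1 x = x) \<and>
     (\<forall>x. cstar_pos star (ip x x)) \<and>
     (\<forall>x. ip x x = 0 \<longleftrightarrow> x = 0) \<and>
     (\<forall>x y. ip x y = star (ip y x)) \<and>
     (\<forall>a b x y. ip (act a x) (act b y) = star a * ip x y * b) \<and>
     (\<forall>x y z. ip x (y + z) = ip x y + ip x z) \<and>
     (\<forall>f. hm_cauchy ip f \<longrightarrow> (\<exists>x. hm_tendsto ip f x))"

definition submodule :: "('a \<Rightarrow> 'e::ab_group_add \<Rightarrow> 'e) \<Rightarrow> 'e set \<Rightarrow> bool" where
  "submodule act M \<longleftrightarrow> 0 \<in> M \<and> (\<forall>x\<in>M. \<forall>y\<in>M. x + y \<in> M) \<and> (\<forall>a. \<forall>x\<in>M. act a x \<in> M)"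

definition hm_closed :: "('e::ab_group_add \<Rightarrow> 'e \<Rightarrow> 'a::real_normed_vector) \<Rightarrow> 'e set \<Rightarrow> bool" where
  "hm_closed ip M \<longleftrightarrow> (\<forall>f x. (\<forall>n. f n \<in> M) \<and> hm_tendsto ip f x \<longrightarrow> x \<in> M)"

definition orth_compl :: "('e \<Rightarrow> 'e \<Rightarrow> 'a::zero) \<Rightarrow> 'e set \<Rightarrow> 'e set" where
  "orth_compl ip M = {y. \<forall>m\<in>M. ip m y = 0}"

definition orth_complemented :: "('e::ab_group_add \<Rightarrow> 'e \<Rightarrow> 'a::zero) \<Rightarrow> 'e set \<Rightarrow> bool" where
  "orth_complemented ip M \<longleftrightarrow> (\<forall>x. \<exists>m\<in>M. \<exists>n\<in>orth_compl ip M. x = m + n)"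

definition two_ip :: "('e \<Rightarrow> 'e \<Rightarrow> 'a::ring) \<Rightarrow> 'e \<Rightarrow> 'e \<Rightarrow> 'e \<Rightarrow> 'a" where
  "two_ip ip x y z = ip x y * ip z z - ip x z * ip z y"

definition L_perp :: "('a \<Rightarrow> 'e \<Rightarrow> 'e) \<Rightarrow> ('e \<Rightarrow> 'e \<Rightarrow> 'a::zero) \<Rightarrow> 'e \<Rightarrow> 'e set" where
  "L_perp act ip \<xi> = {x. \<forall>a. ip (act a \<xi>) x = 0}"

end

theory Submission
  imports Defs "HOL-Computational_Algebra.Formal_Power_Series"
begin

definition hc :: "nat \<Rightarrow> real" where "hc k = (1/2::real) gchoose k"

lemma dj_nonneg: "0 \<le> ((-1/2::real) gchoose j) * (-1)^j"
proof -
  have "fact j * (((-1/2::real) gchoose j) * (-1)^j) = (\<Prod>i = 0..<j. (-1/2::real) - of_nat i) * (\<Prod>i = 0..<j. (-1::real))"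
    by (simp add: gbinomial_mult_fact[symmetric])
  also have "\<dots> = (\<Prod>i = 0..<j. 1/2 + of_nat i)"
    by (subst prod.distrib[symmetric]) (simp add: algebra_simps)
  also have "\<dots> \<ge> 0" by (intro prod_nonneg) auto
  finally have h: "0 \<le> fact j * (((-1/2::real) gchoose j) * (-1)^j)" .
  define X where "X = ((-1/2::real) gchoose j) * (-1)^j"
  show ?thesis unfolding X_def[symmetric]
  proof (rule ccontr)
    assume "\<not> 0 \<le> X"
    then have "fact j * X < (0::real)" by (intro mult_pos_neg) simp_all
    then show False using h unfolding X_def by simp
  qed
qed

lemma hc_abs: "\<bar>hc k\<bar> = (if k = 0 then 2 else 0) - hc k * (-1)^k"
proof (cases k)
  case 0 then show ?thesis by (simp add: hc_def)
next
  case (Suc j)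
  have "hc k = (1/2) / of_nat k * ((-1/2::real) gchoose j)"
    unfolding hc_def using gbinomial_absorption'[of k "1/2::real"] Suc by simp
  hence e: "hc k * (-1)^k = - ((1/2) / of_nat k * (((-1/2::real) gchoose j) * (-1)^j))"
    using Suc by simp
  have "0 \<le> (1/2) / of_nat k * (((-1/2::real) gchoose j) * (-1)^j)"
    using dj_nonneg[of j] by simp
  hence "hc k * (-1)^k \<le> 0" using e by simp
  moreover have "\<bar>hc k\<bar> = \<bar>hc k * (-1)^k\<bar>" by (simp add: abs_mult power_abs)
  ultimately show ?thesis using Suc by simp
qed

lemma summable_hc: "summable (\<lambda>k. \<bar>hc k\<bar>)"
proof (rule summableI_nonneg_bounded[where x=2])
  fix n
  show "sum (\<lambda>k. \<bar>hc k\<bar>) {..<n} \<le> 2"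
  proof (cases n)
    case 0 then show ?thesis by simp
  next
    case (Suc m)
    have "sum (\<lambda>k. \<bar>hc k\<bar>) {..<n} = (\<Sum>k\<le>m. (if k = 0 then 2 else 0)) - (\<Sum>k\<le>m. hc k * (-1)^k)"
      unfolding hc_abs Suc lessThan_Suc_atMost by (simp add: sum_subtractf)
    also have "(\<Sum>k\<le>m. (if k = 0 then 2 else 0::real)) = 2"
      by (simp add: sum.delta)
    also have "(\<Sum>k\<le>m. hc k * (-1)^k) = (-1)^m * ((1/2::real) - 1 gchoose m)"
      unfolding hc_def by (rule gbinomial_sum_lower_neg)
    finally have "sum (\<lambda>k. \<bar>hc k\<bar>) {..<n} = 2 - (-1)^m * ((1/2::real) - 1 gchoose m)" .
    moreover have "(-1)^m * ((1/2::real) - 1 gchoose m) \<ge> 0" using dj_nonneg[of m] by (simp add: mult.commute)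
    ultimately show ?thesis by simp
  qed
qed simp

lemma hc_conv: "(\<Sum>i\<le>k. hc i * hc (k - i)) = (if k \<le> 1 then 1 else 0)"
proof -
  have "(\<Sum>i\<le>k. hc i * hc (k - i)) = (1/2 + 1/2::real) gchoose k"
    unfolding hc_def gbinomial_Vandermonde[symmetric] atMost_atLeast0 ..
  also have "\<dots> = of_nat (1 choose k)" by (simp add: binomial_gbinomial[where 'a=real])
  also have "\<dots> = (if k \<le> 1 then 1 else 0)" by (cases k) (auto simp: binomial_eq_0)
  finally show ?thesis .
qed

locale cca =
  fixes star :: "'a::{comm_ring_1, real_normed_algebra_1, banach} \<Rightarrow> 'a"
    and cscale :: "complex \<Rightarrow> 'a \<Rightarrow> 'a"
  assumes C: "comm_cstar_algebra star cscale"
begin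

lemma cs_real: "cscale (complex_of_real r) a = scaleR r a" using C unfolding comm_cstar_algebra_def by auto
lemma cs_mult: "cscale (c * d) a = cscale c (cscale d a)" using C unfolding comm_cstar_algebra_def by auto
lemma cs_mult2: "cscale c (a * b) = cscale c a * b" using C unfolding comm_cstar_algebra_def by auto
lemma cs_norm: "norm (cscale c a) = cmod c * norm a" using C unfolding comm_cstar_algebra_def by auto
lemma st_invol[simp]: "star (star a) = a" using C unfolding comm_cstar_algebra_def by auto
lemma st_add: "star (a + b) = star a + star b" using C unfolding comm_cstar_algebra_def by auto
lemma st_cs: "star (cscale c a) = cscale (cnj c) (star a)" using C unfolding comm_cstar_algebra_def by auto
lemma st_mult: "star (a * b) = star b * star a" using C unfolding comm_cstar_algebra_def by auto
lemma cstar_id: "norm (star a * a) = (norm a)\<^sup>2" using C unfolding comm_cstar_algebra_def by auto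

lemma st_0[simp]: "star 0 = 0"
  using st_add[of 0 0] by simp
lemma st_minus: "star (- a) = - star a"
proof -
  have "star a + star (-a) = 0" using st_add[of a "-a"] by simp
  thus ?thesis by (metis add.commute eq_neg_iff_add_eq_0)
qed
lemma st_diff: "star (a - b) = star a - star b"
  using st_add[of a "-b"] st_minus[of b] by simp
lemma st_1[simp]: "star 1 = 1"
proof -
  have "star (star 1 * 1) = star 1 * star (star 1)" by (rule st_mult)
  thus ?thesis by simp
qed
lemma st_scaleR: "star (r *\<^sub>R a) = r *\<^sub>R star a"
  using st_cs[of "complex_of_real r" a] by (simp add: cs_real)
lemma st_pow: "star (a ^ n) = star a ^ n"
  by (induction n) (simp_all add: st_mult mult.commute)

lemma st_norm: "norm (star a) = norm a"
proof -
  have 1: "norm b \<le> norm (star b)" for b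
  proof (cases "norm b = 0")
    case False
    have "norm b * norm b = norm (star b * b)" using cstar_id[of b] by (simp add: power2_eq_square)
    also have "\<dots> \<le> norm (star b) * norm b" by (rule norm_mult_ineq)
    finally show ?thesis using False by simp
  qed simp
  show ?thesis using 1[of a] 1[of "star a"] by simp
qed

lemma bl_star: "bounded_linear star"
  by (rule bounded_linear_intro[where K=1]) (simp_all add: st_add st_scaleR st_norm)

definition ii :: 'a where "ii = cscale \<i> 1"
lemma ii_sq: "ii * ii = -1"
proof -
  have "ii * ii = cscale \<i> (1 * cscale \<i> 1)" unfolding ii_def by (rule cs_mult2[symmetric])
  also have "\<dots> = cscale (\<i> * \<i>) 1" by (simp only: cs_mult mult_1_left)
  also have "\<dots> = cscale (complex_of_real (-1)) 1" by simp
  finally show ?thesis using cs_real[of "-1" 1] by simp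
qed
lemma st_ii: "star ii = - ii"
proof -
  have "star ii = cscale (complex_of_real (-1) * \<i>) 1" unfolding ii_def by (simp add: st_cs)
  also have "\<dots> = - ii" unfolding ii_def cs_mult cs_real by simp
  finally show ?thesis .
qed
lemma norm_ii_mult: "norm (ii * w) = norm w"
proof -
  have "ii * w = cscale \<i> (1 * w)" unfolding ii_def by (rule cs_mult2[symmetric])
  thus ?thesis by (simp add: cs_norm)
qed

lemma sqrt_bd:
  assumes sy: "star y = y" and ny: "norm y \<le> 1"
  shows "\<exists>s. star s = s \<and> s * s = 1 + y"
proof -
  define f where "f n = hc n *\<^sub>R y ^ n" for n
  have nf: "norm (f n) \<le> \<bar>hc n\<bar>" for n
  proof -
    have "norm (f n) = \<bar>hc n\<bar> * norm (y ^ n)" unfolding f_def by simp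
    also have "\<dots> \<le> \<bar>hc n\<bar> * 1"
    proof (rule mult_left_mono)
      have "norm (y ^ n) \<le> norm y ^ n" by (rule norm_power_ineq)
      also have "\<dots> \<le> 1" using ny by (simp add: power_le_one)
      finally show "norm (y ^ n) \<le> 1" .
    qed simp
    finally show ?thesis by simp
  qed
  have sn: "summable (\<lambda>n. norm (f n))"
    by (rule summable_comparison_test[OF _ summable_hc]) (use nf in auto)
  hence sf: "summable f" by (rule summable_norm_cancel)
  define s where "s = suminf f"
  have "s * s = (\<Sum>k. \<Sum>i\<le>k. f i * f (k - i))"
    unfolding s_def by (rule Cauchy_product[OF sn sn])
  also have "(\<lambda>k. \<Sum>i\<le>k. f i * f (k - i)) = (\<lambda>k. (if k \<le> 1 then 1 else 0) *\<^sub>R y ^ k)"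
  proof
    fix k
    have "(\<Sum>i\<le>k. f i * f (k - i)) = (\<Sum>i\<le>k. (hc i * hc (k - i)) *\<^sub>R y ^ k)"
    proof (rule sum.cong)
      fix i assume "i \<in> {..k}"
      hence "y ^ i * y ^ (k - i) = y ^ k" by (simp add: power_add[symmetric])
      thus "f i * f (k - i) = (hc i * hc (k - i)) *\<^sub>R y ^ k" unfolding f_def by simp
    qed simp
    also have "\<dots> = (\<Sum>i\<le>k. hc i * hc (k - i)) *\<^sub>R y ^ k" by (simp add: scaleR_sum_left)
    finally show "(\<Sum>i\<le>k. f i * f (k - i)) = (if k \<le> 1 then 1 else 0) *\<^sub>R y ^ k" by (simp add: hc_conv)
  qed
  also have "(\<Sum>k. (if k \<le> 1 then 1 else 0) *\<^sub>R y ^ k) = (\<Sum>k\<in>{..<2}. (if k \<le> 1 then 1 else 0) *\<^sub>R y ^ k)"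
    by (rule suminf_finite) auto
  also have "\<dots> = 1 + y" by (simp add: numeral_2_eq_2)
  finally have ss: "s * s = 1 + y" .
  have "star s = (\<Sum>n. star (f n))" unfolding s_def by (rule bounded_linear.suminf[OF bl_star sf])
  also have "(\<lambda>n. star (f n)) = f" unfolding f_def by (simp add: st_scaleR st_pow sy)
  finally have "star s = s" unfolding s_def .
  with ss show ?thesis by blast
qed

end

context cca begin

lemma sqrt_pos:
  assumes sa: "star a = a" and n: "norm (t *\<^sub>R 1 - a) \<le> t"
  shows "\<exists>e. star e = e \<and> a = e * e"
proof -
  define t' where "t' = t + 1"
  have t0: "t' > 0" using n norm_ge_zero[of "t *\<^sub>R 1 - a"] unfolding t'_def by linarith
  have "t' *\<^sub>R 1 - a = (t *\<^sub>R 1 - a) + 1" unfolding t'_def by (simp add: algebra_simps)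
  hence "norm (t' *\<^sub>R 1 - a) \<le> norm (t *\<^sub>R 1 - a) + norm (1::'a)" by (metis norm_triangle_ineq)
  hence n': "norm (t' *\<^sub>R 1 - a) \<le> t'" using n unfolding t'_def by simp
  define y where "y = (1/t') *\<^sub>R (a - t' *\<^sub>R 1)"
  have "norm y = norm (t' *\<^sub>R 1 - a) / t'" unfolding y_def using t0 by (simp add: norm_minus_commute)
  hence ny: "norm y \<le> 1" using n' t0 by simp
  have sy: "star y = y" unfolding y_def by (simp add: st_scaleR st_diff sa)
  obtain s where s: "star s = s" "s * s = 1 + y" using sqrt_bd[OF sy ny] by blast
  define e where "e = sqrt t' *\<^sub>R s"
  have "e * e = (sqrt t' * sqrt t') *\<^sub>R (s * s)" unfolding e_def by simp
  also have "\<dots> = t' *\<^sub>R (1 + y)" using t0 s by simp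
  also have "\<dots> = a" unfolding y_def using t0 by (simp add: algebra_simps)
  finally show ?thesis using s unfolding e_def by (intro exI[of _ e]) (simp add: st_scaleR e_def)
qed

lemma sq_bound:
  assumes su: "star u = u"
  shows "norm ((norm u)\<^sup>2 *\<^sub>R 1 - u * u) \<le> (norm u)\<^sup>2"
proof (cases "u = 0")
  case True then show ?thesis by simp
next
  case False
  define r where "r = norm u"
  have r0: "r > 0" using False unfolding r_def by simp
  have "norm (r *\<^sub>R 1 - (r *\<^sub>R 1 - u)) \<le> r" unfolding r_def by simp
  then obtain s1 where s1: "star s1 = s1" "r *\<^sub>R 1 - u = s1 * s1"
    using sqrt_pos[of "r *\<^sub>R 1 - u" r] su by (auto simp: st_diff st_scaleR)
  have "norm (r *\<^sub>R 1 - (r *\<^sub>R 1 + u)) \<le> r" unfolding r_def by simp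
  then obtain s2 where s2: "star s2 = s2" "r *\<^sub>R 1 + u = s2 * s2"
    using sqrt_pos[of "r *\<^sub>R 1 + u" r] su by (auto simp: st_add st_scaleR)
  define w where "w = s1 * s2"
  have sw: "star w = w" unfolding w_def by (simp add: st_mult s1 s2 mult.commute)
  have ww: "w * w = r\<^sup>2 *\<^sub>R 1 - u * u"
  proof -
    have "w * w = (s1 * s1) * (s2 * s2)" unfolding w_def by (simp add: ac_simps)
    also have "\<dots> = (r *\<^sub>R 1 - u) * (r *\<^sub>R 1 + u)" using s1 s2 by simp
    also have "\<dots> = r\<^sup>2 *\<^sub>R 1 - u * u" by (simp add: algebra_simps power2_eq_square)
    finally show ?thesis .
  qed
  define z where "z = u + ii * w"
  have sz: "star z = u - ii * w" unfolding z_def by (simp add: st_add st_mult st_ii su sw)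
  have "star z * z = (u - ii * w) * (u + ii * w)" using sz unfolding z_def by simp
  also have "\<dots> = u * u - (ii * ii) * (w * w)" by (simp add: algebra_simps)
  also have "\<dots> = r\<^sup>2 *\<^sub>R 1" using ii_sq ww by simp
  finally have "norm (star z * z) = r\<^sup>2" by simp
  hence "(norm z)\<^sup>2 = r\<^sup>2" using cstar_id by simp
  hence nz: "norm z = r" using r0 by (simp add: power2_eq_iff_nonneg)
  have "2 *\<^sub>R (ii * w) = z - star z" using sz unfolding z_def by (simp add: scaleR_2)
  hence "norm (2 *\<^sub>R (ii * w)) = norm (z - star z)" by simp
  hence "2 * norm (ii * w) = norm (z - star z)" by simp
  also have "\<dots> \<le> norm z + norm (star z)" by (rule norm_triangle_ineq4)
  finally have "norm w \<le> r" using nz st_norm[of z] norm_ii_mult[of w] by simp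
  hence "norm w * norm w \<le> r * r" using r0 by (intro mult_mono) auto
  hence "norm (w * w) \<le> r\<^sup>2" using norm_mult_ineq[of w w] by (simp add: power2_eq_square)
  thus ?thesis using ww unfolding r_def by simp
qed

abbreviation pos where "pos a \<equiv> cstar_pos star a"

lemma pos_sa: "pos a \<Longrightarrow> star a = a"
  unfolding cstar_pos_def by (auto simp: st_mult)

lemma pos_P: assumes "pos a" shows "\<exists>t\<ge>0. norm (t *\<^sub>R 1 - a) \<le> t"
proof -
  obtain c where c: "a = star c * c" using assms unfolding cstar_pos_def by blast
  define u where "u = (1/2) *\<^sub>R (c + star c)"
  define v where "v = (1/2) *\<^sub>R (ii * (star c - c))"
  have su: "star u = u" unfolding u_def by (simp add: st_scaleR st_add add.commute)
  have sv: "star v = v" unfolding v_def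
    by (simp add: st_scaleR st_mult st_diff st_ii algebra_simps)
  have iv: "ii * v = (1/2) *\<^sub>R (c - star c)"
  proof -
    have "ii * v = (1/2) *\<^sub>R ((ii * ii) * (star c - c))" unfolding v_def by (simp add: mult.assoc)
    thus ?thesis by (simp add: ii_sq algebra_simps)
  qed
  have cu: "c = u + ii * v" unfolding iv u_def by (simp add: algebra_simps scaleR_2[symmetric])
  have scu: "star c = u - ii * v" unfolding iv u_def by (simp add: algebra_simps scaleR_2[symmetric])
  have "a = (u - ii * v) * (u + ii * v)" using c cu scu by simp
  also have "\<dots> = u * u - (ii * ii) * (v * v)" by (simp add: algebra_simps)
  also have "\<dots> = u * u + v * v" by (simp add: ii_sq)
  finally have a: "a = u * u + v * v" .
  define t where "t = (norm u)\<^sup>2 + (norm v)\<^sup>2"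
  have "t *\<^sub>R 1 - a = ((norm u)\<^sup>2 *\<^sub>R 1 - u * u) + ((norm v)\<^sup>2 *\<^sub>R 1 - v * v)"
    unfolding a t_def by (simp add: algebra_simps)
  hence "norm (t *\<^sub>R 1 - a) \<le> norm ((norm u)\<^sup>2 *\<^sub>R 1 - u * u) + norm ((norm v)\<^sup>2 *\<^sub>R 1 - v * v)"
    by (metis norm_triangle_ineq)
  also have "\<dots> \<le> t" unfolding t_def using sq_bound[OF su] sq_bound[OF sv] by linarith
  finally show ?thesis unfolding t_def by (intro exI[of _ t]) (simp add: t_def)
qed

lemma P_pos: assumes "star a = a" "norm (t *\<^sub>R 1 - a) \<le> t" shows "pos a"
proof -
  obtain e where "star e = e" "a = e * e" using sqrt_pos[OF assms] by blast
  thus ?thesis unfolding cstar_pos_def by metis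
qed

lemma pos_add: assumes "pos a" "pos b" shows "pos (a + b)"
proof -
  obtain t where t: "norm (t *\<^sub>R 1 - a) \<le> t" using pos_P[OF assms(1)] by blast
  obtain s where s: "norm (s *\<^sub>R 1 - b) \<le> s" using pos_P[OF assms(2)] by blast
  have eq: "(t + s) *\<^sub>R 1 - (a + b) = (t *\<^sub>R 1 - a) + (s *\<^sub>R 1 - b)" by (simp add: algebra_simps)
  have "norm ((t + s) *\<^sub>R 1 - (a + b)) \<le> norm (t *\<^sub>R 1 - a) + norm (s *\<^sub>R 1 - b)"
    unfolding eq by (rule norm_triangle_ineq)
  hence "norm ((t + s) *\<^sub>R 1 - (a + b)) \<le> t + s" using t s by linarith
  moreover have "star (a + b) = a + b" using pos_sa[OF assms(1)] pos_sa[OF assms(2)] by (simp add: st_add)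
  ultimately show ?thesis using P_pos by blast
qed

lemma pos_mult: assumes "pos a" "pos b" shows "pos (a * b)"
proof -
  obtain c d where "a = star c * c" "b = star d * d" using assms unfolding cstar_pos_def by blast
  hence "a * b = star (c * d) * (c * d)" by (simp add: st_mult ac_simps)
  thus ?thesis unfolding cstar_pos_def by blast
qed

lemma pos_scale: assumes "r \<ge> 0" "pos a" shows "pos (r *\<^sub>R a)"
proof -
  obtain c where "a = star c * c" using assms unfolding cstar_pos_def by blast
  hence "r *\<^sub>R a = star (sqrt r *\<^sub>R c) * (sqrt r *\<^sub>R c)" using assms(1) by (simp add: st_scaleR)
  thus ?thesis unfolding cstar_pos_def by blast
qed

lemma sa_bound: assumes "star a = a" shows "pos (norm a *\<^sub>R 1 - a)"
  by (rule P_pos[where t="norm a"]) (simp_all add: assms st_diff st_scaleR)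

end

theorem proposition2p3:
  fixes star :: "'a::{comm_ring_1, real_normed_algebra_1, banach} \<Rightarrow> 'a"
    and cscale :: "complex \<Rightarrow> 'a \<Rightarrow> 'a"
    and act :: "'a \<Rightarrow> 'e::ab_group_add \<Rightarrow> 'e"
    and ip :: "'e \<Rightarrow> 'e \<Rightarrow> 'a"
    and \<xi> :: 'e
    and xs :: "nat \<Rightarrow> 'e"
    and A B :: real
  assumes hm: "hilbert_module star cscale act ip"
    and compl: "\<forall>M. submodule act M \<and> hm_closed ip M \<longrightarrow> orth_complemented ip M"
    and inv: "\<exists>b. ip \<xi> \<xi> * b = 1"
    and AB: "0 < A" "A \<le> B"
    and frame: "\<forall>x. summable (\<lambda>i. two_ip ip x (xs i) \<xi> * two_ip ip (xs i) x \<xi>)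
        \<and> cstar_le star (A *\<^sub>R two_ip ip x x \<xi>) (\<Sum>i. two_ip ip x (xs i) \<xi> * two_ip ip (xs i) x \<xi>)
        \<and> cstar_le star (\<Sum>i. two_ip ip x (xs i) \<xi> * two_ip ip (xs i) x \<xi>) (B *\<^sub>R two_ip ip x x \<xi>)"
  shows "\<exists>C D::real. 0 < C \<and> C \<le> D \<and>
    (\<forall>x \<in> L_perp act ip \<xi>. summable (\<lambda>i. ip x (xs i) * ip (xs i) x)
        \<and> cstar_le star (C *\<^sub>R ip x x) (\<Sum>i. ip x (xs i) * ip (xs i) x)
        \<and> cstar_le star (\<Sum>i. ip x (xs i) * ip (xs i) x) (D *\<^sub>R ip x x))"
proof -
  have Ca: "comm_cstar_algebra star cscale" using hm unfolding hilbert_module_def by (elim conjE) assumption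
  interpret cca star cscale by (rule cca.intro[OF Ca])
  have act1a: "\<forall>y. act 1 y = y" using hm unfolding hilbert_module_def by (elim conjE) assumption
  have ipstara: "\<forall>y z. ip y z = star (ip z y)" using hm unfolding hilbert_module_def by (elim conjE) assumption
  have ipposa: "\<forall>y. pos (ip y y)" using hm unfolding hilbert_module_def by (elim conjE) assumption
  have act1: "act 1 y = y" for y using act1a by blast
  have ipstar: "ip y z = star (ip z y)" for y z using ipstara by blast
  have ippos: "pos (ip y y)" for y using ipposa by blast
  define g where "g = ip \<xi> \<xi>"
  obtain b where gb: "g * b = 1" using inv unfolding g_def by blast
  have pg: "pos g" unfolding g_def by (rule ippos)
  have sg: "star g = g" by (rule pos_sa[OF pg])
  have "star b * g = 1" using arg_cong[OF gb, of star] by (simp add: st_mult sg)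
  hence sb: "star b = b"
  proof -
    assume h: "star b * g = 1"
    have "star b = star b * (g * b)" using gb by simp
    also have "\<dots> = (star b * g) * b" by (simp add: mult.assoc)
    finally show ?thesis using h by simp
  qed
  obtain c where gc: "g = star c * c" using pg unfolding cstar_pos_def by blast
  have "star (c * b) * (c * b) = (star c * c) * b * b" by (simp add: st_mult sb ac_simps)
  also have "\<dots> = (g * b) * b" using gc by simp
  also have "\<dots> = b" using gb by simp
  finally have "star (c * b) * (c * b) = b" .
  hence pb: "pos b" unfolding cstar_pos_def by metis
  have pbb: "pos (b * b)" by (rule pos_mult[OF pb pb])
  have g1: "pos (norm g *\<^sub>R b - 1)"
  proof -
    have "pos ((norm g *\<^sub>R 1 - g) * b)" by (rule pos_mult[OF sa_bound[OF sg] pb])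
    also have "(norm g *\<^sub>R 1 - g) * b = norm g *\<^sub>R b - 1" using gb by (simp add: algebra_simps)
    finally show ?thesis .
  qed
  have b1: "pos (norm b *\<^sub>R 1 - b)" by (rule sa_bound[OF sb])
  have "norm (1::'a) \<le> norm g * norm b" using norm_mult_ineq[of g b] gb by simp
  hence ngb: "1 \<le> norm g * norm b" by simp
  hence ng0: "norm g > 0" using norm_ge_zero[of g] by (cases "norm g = 0") auto
  define C where "C = A / norm g"
  define D where "D = B * norm b"
  have C0: "0 < C" unfolding C_def using AB ng0 by simp
  have "A \<le> A * (norm g * norm b)" using AB ngb by (simp add: mult_le_cancel_left1)
  hence "C \<le> A * norm b" unfolding C_def using ng0 by (simp add: field_simps)
  also have "A * norm b \<le> D" unfolding D_def using AB by (simp add: mult_right_mono)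
  finally have CD: "C \<le> D" .
  have main: "(\<forall>x \<in> L_perp act ip \<xi>. summable (\<lambda>i. ip x (xs i) * ip (xs i) x)
        \<and> cstar_le star (C *\<^sub>R ip x x) (\<Sum>i. ip x (xs i) * ip (xs i) x)
        \<and> cstar_le star (\<Sum>i. ip x (xs i) * ip (xs i) x) (D *\<^sub>R ip x x))"
  proof
    fix x assume xL: "x \<in> L_perp act ip \<xi>"
    have "ip (act 1 \<xi>) x = 0" using xL unfolding L_perp_def by blast
    hence h1: "ip \<xi> x = 0" using act1[of \<xi>] by simp
    have h2: "ip x \<xi> = 0" using ipstar[of x \<xi>] h1 by simp
    define p where "p = ip x x"
    define t where "t i = ip x (xs i) * ip (xs i) x" for i
    have e1: "two_ip ip x (xs i) \<xi> * two_ip ip (xs i) x \<xi> = t i * (g * g)" for i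
      unfolding two_ip_def t_def g_def using h1 h2 by (simp add: ac_simps)
    have e2: "two_ip ip x x \<xi> = p * g" unfolding two_ip_def p_def g_def using h1 h2 by simp
    have fx: "summable (\<lambda>i. t i * (g * g))"
      "cstar_le star (A *\<^sub>R (p * g)) (\<Sum>i. t i * (g * g))"
      "cstar_le star (\<Sum>i. t i * (g * g)) (B *\<^sub>R (p * g))"
      using frame[rule_format, of x] unfolding e1 e2 by auto
    have ggbb: "(g * g) * (b * b) = 1"
    proof -
      have "(g * g) * (b * b) = (g * b) * (g * b)" by (simp add: ac_simps)
      thus ?thesis using gb by simp
    qed
    have "summable (\<lambda>i. t i * (g * g) * (b * b))" by (rule summable_mult2[OF fx(1)])
    hence st: "summable t" using ggbb by (simp add: mult.assoc)
    define S where "S = suminf t"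
    have Sg: "(\<Sum>i. t i * (g * g)) = S * (g * g)" unfolding S_def by (rule suminf_mult2[OF st, symmetric])
    have pp: "pos p" unfolding p_def by (rule ippos)
    have lowA: "pos (S - A *\<^sub>R (p * b))"
    proof -
      have "pos (S * (g * g) - A *\<^sub>R (p * g))" using fx(2) unfolding Sg cstar_le_def by auto
      hence "pos ((S * (g * g) - A *\<^sub>R (p * g)) * (b * b))" using pbb by (rule pos_mult)
      also have "(S * (g * g) - A *\<^sub>R (p * g)) * (b * b) = S * ((g * b) * (g * b)) - A *\<^sub>R (p * (g * b) * b)"
        by (simp add: algebra_simps)
      finally show ?thesis using gb by simp
    qed
    have upB: "pos (B *\<^sub>R (p * b) - S)"
    proof -
      have "pos (B *\<^sub>R (p * g) - S * (g * g))" using fx(3) unfolding Sg cstar_le_def by auto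
      hence "pos ((B *\<^sub>R (p * g) - S * (g * g)) * (b * b))" using pbb by (rule pos_mult)
      also have "(B *\<^sub>R (p * g) - S * (g * g)) * (b * b) = B *\<^sub>R (p * (g * b) * b) - S * ((g * b) * (g * b))"
        by (simp add: algebra_simps)
      finally show ?thesis using gb by simp
    qed
    have low: "pos (S - C *\<^sub>R p)"
    proof -
      have "pos ((S - A *\<^sub>R (p * b)) + C *\<^sub>R (p * (norm g *\<^sub>R b - 1)))"
        using C0 by (intro pos_add lowA pos_scale pos_mult pp g1) simp
      also have "(S - A *\<^sub>R (p * b)) + C *\<^sub>R (p * (norm g *\<^sub>R b - 1)) = S - C *\<^sub>R p"
        unfolding C_def using ng0 by (simp add: algebra_simps)
      finally show ?thesis .
    qed
    have up: "pos (D *\<^sub>R p - S)"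
    proof -
      have "pos ((B *\<^sub>R (p * b) - S) + B *\<^sub>R (p * (norm b *\<^sub>R 1 - b)))"
        using AB by (intro pos_add upB pos_scale pos_mult pp b1) simp
      also have "(B *\<^sub>R (p * b) - S) + B *\<^sub>R (p * (norm b *\<^sub>R 1 - b)) = D *\<^sub>R p - S"
        unfolding D_def by (simp add: algebra_simps)
      finally show ?thesis .
    qed
    have sCp: "star (C *\<^sub>R p) = C *\<^sub>R p" "star (D *\<^sub>R p) = D *\<^sub>R p"
      using pos_sa[OF pp] by (simp_all add: st_scaleR)
    have sS: "star S = S"
    proof -
      have "star (S - C *\<^sub>R p) = S - C *\<^sub>R p" by (rule pos_sa[OF low])
      thus ?thesis using sCp by (simp add: st_diff)
    qed
    have r1: "summable (\<lambda>i. ip x (xs i) * ip (xs i) x)" using st unfolding t_def .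
    have r2: "cstar_le star (C *\<^sub>R ip x x) (\<Sum>i. ip x (xs i) * ip (xs i) x)"
      using low sCp sS unfolding cstar_le_def S_def t_def p_def by simp
    have r3: "cstar_le star (\<Sum>i. ip x (xs i) * ip (xs i) x) (D *\<^sub>R ip x x)"
      using up sCp sS unfolding cstar_le_def S_def t_def p_def by simp
    show "summable (\<lambda>i. ip x (xs i) * ip (xs i) x)
        \<and> cstar_le star (C *\<^sub>R ip x x) (\<Sum>i. ip x (xs i) * ip (xs i) x)
        \<and> cstar_le star (\<Sum>i. ip x (xs i) * ip (xs i) x) (D *\<^sub>R ip x x)" using r1 r2 r3 by blast
  qed
  show ?thesis using C0 CD main by blast
qed

end
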